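(* Consider the discrete-time system with sensor and actuator attacks described in the context. Let $q$ be the largest integer such that for every $J_s\subset\{1,\ldots,n_y\}$ with $\card(J_s)\ge n_y-2q>0$ a complete UIO for $J_s$ exists, and suppose the set of attacked sensors satisfies $\card(W_y)\le q<\frac{n_y}{2}$ (the actuator attack $a_u$ is arbitrary; all actuators may be attacked). Run a complete UIO $\hat x_{J_s}$ for each $J_s\subset\{1,\dots,n_y\}$ with $\card(J_s)=n_y-q$ and a complete UIO $\hat x_{S_s}$ for each $S_s\subset\{1,\dots,n_y\}$ with $\card(S_s)=n_y-2q$. For each $k\ge0$ and each $J_s$ with $\card(J_s)=n_y-q$ define $$\pi_{J_s}(k)=\max_{S_s\subset J_s,\ \card(S_s)=n_y-2q}|\hat x_{J_s}(k)-\hat x_{S_s}(k)|,$$ let $\sigma_s(k)$ be a minimizer of $\pi_{J_s}(k)$ over all $J_s\subset\{1,\dots,n_y\}$ with $\card(J_s)=n_y-q$, and set $\hat x(k)=\hat x_{\sigma_s(k)}(k)$. Define $e(k)=\hat x_{\sigma_s(k)}(k)-x(k)$. Then there exists a class-$\mathcal{KL}$ function $\bar\beta$ such that $$|e(k)|\le\bar\beta(e_0,k)\quad\text{for all }k\ge0,\qquad e_0:=\max_{J_s:\card(J_s)=n_y-q,\ S_s:\card(S_s)=n_y-2q}\{|e_{J_s}(0)|,|e_{S_s}(0)|\},$$ where $e_{J_s}=\hat x_{J_s}-x$ and $e_{S_s}=\hat x_{S_s}-x$.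
   Context: System: $x(k+1)=f(x(k))+B(u(k)+a_u(k))$, $y(k)=h(x(k))+a_y(k)$, $k\in\mathbb{N}$, with state $x\in\mathbb{R}^n$, known input $u\in\mathbb{R}^{n_u}$, actuator attack $a_u\in\mathbb{R}^{n_u}$, output $y\in\mathbb{R}^{n_y}$, sensor attack $a_y=(a_{y1},\dots,a_{yn_y})^\top\in\mathbb{R}^{n_y}$ (attacks may be arbitrarily large), $f:\mathbb{R}^n\to\mathbb{R}^n$, $h:\mathbb{R}^n\to\mathbb{R}^{n_y}$, $B\in\mathbb{R}^{n\times n_u}$ of full column rank. The unknown set of attacked sensors is $W_y=\{i:a_{yi}(k)\ne0\text{ for some }k\ge0\}$, so $\supp(a_y(k))\subseteq W_y$ for all $k$ (it is time-invariant); similarly the attacked actuator set $W_u=\{i:a_{ui}(k)\ne0\text{ for some }k\ge0\}$ is time-invariant. For $J\subset\{1,\dots,n_y\}$, $y^J$, $a_y^J$ denote subvectors of components indexed by $J$. A complete UIO for $J_s$ is a system $\hat x_{J_s}(k+1)=f_{J_s}(\hat x_{J_s}(k),u(k),y^{J_s}(k),y^{J_s}(k+1))$ with $f_{J_s}:\mathbb{R}^n\times\mathbb{R}^{n_u}\times\mathbb{R}^{\card(J_s)}\times\mathbb{R}^{\card(J_s)}\to\mathbb{R}^n$ such that, with $e_{J_s}=\hat x_{J_s}-x$, there is a class-$\mathcal{KL}$ function $\beta_{J_s}$ with $|e_{J_s}(k)|\le\beta_{J_s}(|e_{J_s}(0)|,k)$ for all $k\ge0$, for all initial conditions $x(0),\hat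 x_{J_s}(0)\in\mathbb{R}^n$, all known inputs and all actuator attacks $a_u$, whenever $a_y^{J_s}(k)=0$ for all $k\ge0$. $|\cdot|$ is the Euclidean norm. *)

theory Defs
  imports "HOL-Analysis.Analysis"
begin

definition class_K :: "(real \<Rightarrow> real) \<Rightarrow> bool" where
  "class_K \<alpha> \<longleftrightarrow> continuous_on {0..} \<alpha> \<and> \<alpha> 0 = 0 \<and> strict_mono_on {0..} \<alpha>"

definition class_KL :: "(real \<Rightarrow> real \<Rightarrow> real) \<Rightarrow> bool" where
  "class_KL \<beta> \<longleftrightarrow>
     (\<forall>t\<ge>0. class_K (\<lambda>s. \<beta> s t)) \<and>
     (\<forall>s\<ge>0. antimono_on {0..} (\<lambda>t. \<beta> s t) \<and> ((\<lambda>t. \<beta> s t) \<longlongrightarrow> 0) at_top)"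

text \<open>Subvector y^J of y, represented by zeroing the components outside J
  (so a map fed with mask J y depends only on y^J).\<close>

definition mask :: "'ny set \<Rightarrow> real^'ny \<Rightarrow> real^'ny" where
  "mask J y = (\<chi> i. if i \<in> J then y $ i else 0)"

definition plant_traj ::
  "(real^'n \<Rightarrow> real^'n) \<Rightarrow> real^'nu^'n \<Rightarrow>
   (nat \<Rightarrow> real^'n) \<Rightarrow> (nat \<Rightarrow> real^'nu) \<Rightarrow> (nat \<Rightarrow> real^'nu) \<Rightarrow> bool" where
  "plant_traj f B x u au \<longleftrightarrow> (\<forall>k. x (Suc k) = f (x k) + B *v (u k + au k))"

definition obs_traj ::
  "(real^'n \<Rightarrow> real^'nu \<Rightarrow> real^'ny \<Rightarrow> real^'ny \<Rightarrow> real^'n) \<Rightarrow> 'ny set \<Rightarrow>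
   (nat \<Rightarrow> real^'nu) \<Rightarrow> (nat \<Rightarrow> real^'ny) \<Rightarrow> (nat \<Rightarrow> real^'n) \<Rightarrow> bool" where
  "obs_traj fJ J u y xh \<longleftrightarrow>
     (\<forall>k. xh (Suc k) = fJ (xh k) (u k) (mask J (y k)) (mask J (y (Suc k))))"

definition complete_UIO ::
  "(real^'n \<Rightarrow> real^'n) \<Rightarrow> real^'nu^'n \<Rightarrow> (real^'n \<Rightarrow> real^'ny) \<Rightarrow> 'ny set \<Rightarrow>
   (real^'n \<Rightarrow> real^'nu \<Rightarrow> real^'ny \<Rightarrow> real^'ny \<Rightarrow> real^'n) \<Rightarrow> bool" where
  "complete_UIO f B h J fJ \<longleftrightarrow>
     (\<exists>\<beta>. class_KL \<beta> \<and>
        (\<forall>x u au ay xh.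
           plant_traj f B x u au \<longrightarrow>
           (\<forall>k. \<forall>i\<in>J. ay k $ i = 0) \<longrightarrow>
           obs_traj fJ J u (\<lambda>k. h (x k) + ay k) xh \<longrightarrow>
           (\<forall>k. norm (xh k - x k) \<le> \<beta> (norm (xh 0 - x 0)) (real k))))"

definition UIO_exists ::
  "(real^'n \<Rightarrow> real^'n) \<Rightarrow> real^'nu^'n \<Rightarrow> (real^'n \<Rightarrow> real^'ny) \<Rightarrow> 'ny set \<Rightarrow> bool" where
  "UIO_exists f B h J \<longleftrightarrow> (\<exists>fJ. complete_UIO f B h J fJ)"

definition UIO_redundancy ::
  "(real^'n \<Rightarrow> real^'n) \<Rightarrow> real^'nu^'n \<Rightarrow> (real^'n \<Rightarrow> real^'ny) \<Rightarrow> nat \<Rightarrow> bool" where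
  "UIO_redundancy f B h q \<longleftrightarrow>
     (\<forall>J::'ny set. int (card J) \<ge> int CARD('ny) - 2 * int q \<and> int CARD('ny) - 2 * int q > 0
        \<longrightarrow> UIO_exists f B h J)"

definition pi_fun :: "nat \<Rightarrow> ('ny::finite set \<Rightarrow> nat \<Rightarrow> real^'n) \<Rightarrow> 'ny set \<Rightarrow> nat \<Rightarrow> real" where
  "pi_fun q xh J k =
     Max {norm (xh J k - xh S k) | S. S \<subseteq> J \<and> card S = CARD('ny) - 2 * q}"

end

theory Submission
  imports Defs
begin

lemma class_K_nonneg: "class_K a \<Longrightarrow> s \<ge> 0 \<Longrightarrow> a s \<ge> 0"
  unfolding class_K_def strict_mono_on_def
  by (metis atLeast_iff less_eq_real_def order_refl)

lemma class_K_mono: "class_K a \<Longrightarrow> 0 \<le> s \<Longrightarrow> s \<le> s' \<Longrightarrow> a s \<le> a s'"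
  unfolding class_K_def strict_mono_on_def
  by (metis atLeast_iff less_eq_real_def order_trans)

lemma class_KL_sum:
  assumes F: "finite F" "F \<noteq> {}" and b: "\<And>J. J \<in> F \<Longrightarrow> class_KL (b J)" and c: "c > 0"
  shows "class_KL (\<lambda>s t. \<Sum>J\<in>F. c * b J s t)"
  unfolding class_KL_def
proof (intro conjI allI impI)
  fix t :: real assume t: "t \<ge> 0"
  have K: "class_K (\<lambda>s. b J s t)" if "J \<in> F" for J using b[OF that] t unfolding class_KL_def by blast
  show "class_K (\<lambda>s. \<Sum>J\<in>F. c * b J s t)"
    unfolding class_K_def
  proof (intro conjI)
    show "continuous_on {0..} (\<lambda>s. \<Sum>J\<in>F. c * b J s t)"
      using K unfolding class_K_def by (intro continuous_intros) auto
    show "(\<Sum>J\<in>F. c * b J 0 t) = 0" using K unfolding class_K_def by simp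
    show "strict_mono_on {0..} (\<lambda>s. \<Sum>J\<in>F. c * b J s t)"
      unfolding strict_mono_on_def
    proof (intro allI impI)
      fix r s :: real assume "r \<in> {0..} \<and> s \<in> {0..} \<and> r < s"
      then show "(\<Sum>J\<in>F. c * b J r t) < (\<Sum>J\<in>F. c * b J s t)"
        using K c F unfolding class_K_def strict_mono_on_def
        by (intro sum_strict_mono) auto
    qed
  qed
next
  fix s :: real assume s: "s \<ge> 0"
  have L: "antimono_on {0..} (\<lambda>t. b J s t) \<and> ((\<lambda>t. b J s t) \<longlongrightarrow> 0) at_top" if "J \<in> F" for J
    using b[OF that] s unfolding class_KL_def by blast
  show "antimono_on {0..} (\<lambda>t. \<Sum>J\<in>F. c * b J s t)"
    unfolding monotone_on_def
  proof (intro ballI impI)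
    fix r t :: real assume "r \<in> {0..}" "t \<in> {0..}" "r \<le> t"
    then show "(\<Sum>J\<in>F. c * b J s t) \<le> (\<Sum>J\<in>F. c * b J s r)"
      using L c unfolding monotone_on_def
      by (intro sum_mono) (simp add: mult_left_mono)
  qed
  show "((\<lambda>t. \<Sum>J\<in>F. c * b J s t) \<longlongrightarrow> 0) at_top"
    using L by (intro tendsto_null_sum tendsto_mult_right_zero) auto
qed

theorem theorem1:
  fixes f :: "real^'n \<Rightarrow> real^'n"
    and h :: "real^'n \<Rightarrow> real^'ny::finite"
    and B :: "real^'nu^'n"
    and q :: nat
    and obs :: "'ny set \<Rightarrow> (real^'n \<Rightarrow> real^'nu \<Rightarrow> real^'ny \<Rightarrow> real^'ny \<Rightarrow> real^'n)"
  assumes B_rank: "rank B = CARD('nu)"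
    and q_lt: "2 * q < CARD('ny)"
    and q_prop: "UIO_redundancy f B h q"
    and q_max: "\<forall>q'. 2 * q' < CARD('ny) \<and> UIO_redundancy f B h q' \<longrightarrow> q' \<le> q"
    and obs_J: "\<forall>J::'ny set. card J = CARD('ny) - q \<longrightarrow> complete_UIO f B h J (obs J)"
    and obs_S: "\<forall>S::'ny set. card S = CARD('ny) - 2 * q \<longrightarrow> complete_UIO f B h S (obs S)"
  shows "\<exists>\<beta>. class_KL \<beta> \<and>
    (\<forall>x u au ay xh \<sigma>.
       plant_traj f B x u au \<longrightarrow>
       card {i. \<exists>k. ay k $ i \<noteq> 0} \<le> q \<longrightarrow>
       (\<forall>J. card J = CARD('ny) - q \<or> card J = CARD('ny) - 2 * q \<longrightarrow>
            obs_traj (obs J) J u (\<lambda>k. h (x k) + ay k) (xh J)) \<longrightarrow>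
       (\<forall>k. card (\<sigma> k) = CARD('ny) - q \<and>
            (\<forall>J. card J = CARD('ny) - q \<longrightarrow> pi_fun q xh (\<sigma> k) k \<le> pi_fun q xh J k)) \<longrightarrow>
       (\<forall>k. norm (xh (\<sigma> k) k - x k) \<le>
              \<beta> (Max ({norm (xh J 0 - x 0) | J. card J = CARD('ny) - q} \<union>
                       {norm (xh S 0 - x 0) | S. card S = CARD('ny) - 2 * q}))
                (real k)))"
proof -
  let ?n = "CARD('ny)"
  define F where "F = {J::'ny set. card J = ?n - q \<or> card J = ?n - 2 * q}"
  have finF: "finite F" by simp
  obtain J0 :: "'ny set" where J0: "card J0 = ?n - q"
    using obtain_subset_with_card_n[of "?n - q" "UNIV :: 'ny set"] by auto
  have neF: "F \<noteq> {}" using J0 F_def by auto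
  define P where "P = (\<lambda>J \<beta>. class_KL \<beta> \<and>
        (\<forall>x u au ay xh.
           plant_traj f B x u au \<longrightarrow>
           (\<forall>k. \<forall>i\<in>J. ay k $ i = 0) \<longrightarrow>
           obs_traj (obs J) J u (\<lambda>k. h (x k) + ay k) xh \<longrightarrow>
           (\<forall>k. norm (xh k - x k) \<le> \<beta> (norm (xh 0 - x 0)) (real k))))"
  define b where "b = (\<lambda>J. SOME \<beta>. P J \<beta>)"
  have bP: "P J (b J)" if JF: "J \<in> F" for J
  proof -
    have "complete_UIO f B h J (obs J)" using obs_J obs_S JF unfolding F_def by blast
    then have "\<exists>\<beta>. P J \<beta>" unfolding complete_UIO_def P_def .
    then show ?thesis unfolding b_def by (rule someI_ex)
  qed
  have b: "class_KL (b J) \<and>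
        (\<forall>x u au ay xh.
           plant_traj f B x u au \<longrightarrow>
           (\<forall>k. \<forall>i\<in>J. ay k $ i = 0) \<longrightarrow>
           obs_traj (obs J) J u (\<lambda>k. h (x k) + ay k) xh \<longrightarrow>
           (\<forall>k. norm (xh k - x k) \<le> b J (norm (xh 0 - x 0)) (real k)))" if "J \<in> F" for J
    using bP[OF that] unfolding P_def by simp
  have bKL: "class_KL (\<lambda>s t. \<Sum>J\<in>F. 3 * b J s t)"
    using class_KL_sum[OF finF neF, of b 3] b by auto
  show ?thesis
  proof (intro exI conjI allI impI, rule bKL)
    fix x u au ay xh \<sigma> k
    assume pl: "plant_traj f B x u au"
      and W: "card {i. \<exists>k. ay k $ i \<noteq> 0} \<le> q"
      and ob: "\<forall>J. card J = CARD('ny) - q \<or> card J = CARD('ny) - 2 * q \<longrightarrow>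
            obs_traj (obs J) J u (\<lambda>k. h (x k) + ay k) (xh J)"
      and sg: "\<forall>k. card (\<sigma> k) = CARD('ny) - q \<and>
            (\<forall>J. card J = CARD('ny) - q \<longrightarrow> pi_fun q xh (\<sigma> k) k \<le> pi_fun q xh J k)"
    define Wy where "Wy = {i. \<exists>k. ay k $ i \<noteq> 0}"
    define e0 where "e0 = Max ({norm (xh J 0 - x 0) | J. card J = CARD('ny) - q} \<union>
                       {norm (xh S 0 - x 0) | S. card S = CARD('ny) - 2 * q})"
    define B1 where "B1 = (\<Sum>J\<in>F. b J e0 (real k))"
    have e0ge: "norm (xh J 0 - x 0) \<le> e0" if "J \<in> F" for J
      unfolding e0_def using that F_def by (intro Max_ge) auto
    have Jb: "norm (xh J k - x k) \<le> B1" if JF: "J \<in> F" and JW: "J \<inter> Wy = {}" for J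
    proof -
      have z: "\<forall>k. \<forall>i\<in>J. ay k $ i = 0" using JW Wy_def by auto
      have "norm (xh J k - x k) \<le> b J (norm (xh J 0 - x 0)) (real k)"
      proof -
        have o: "obs_traj (obs J) J u (\<lambda>k. h (x k) + ay k) (xh J)" using ob JF F_def by blast
        show ?thesis using b[OF JF] pl z o by blast
      qed
      also have "\<dots> \<le> b J e0 (real k)"
        using b[OF JF] e0ge[OF JF] class_K_mono[of "\<lambda>s. b J s (real k)"]
        unfolding class_KL_def by simp
      also have "\<dots> \<le> B1" unfolding B1_def
      proof (rule member_le_sum[OF JF _ finF])
        fix J' assume J': "J' \<in> F - {J}"
        have "0 \<le> e0" using e0ge[OF JF] norm_ge_zero order_trans by blast
        then show "0 \<le> b J' e0 (real k)"
          using b[of J'] J' class_K_nonneg[of "\<lambda>s. b J' s (real k)"] unfolding class_KL_def by simp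
      qed
      finally show ?thesis .
    qed
    have cardW: "card (- Wy) \<ge> ?n - q"
    proof -
      have "card (- Wy) = ?n - card Wy"
        using card_Diff_subset[of Wy UNIV] by (simp add: Compl_eq_Diff_UNIV)
      then show ?thesis using W Wy_def by simp
    qed
    obtain Js where Js: "Js \<subseteq> - Wy" "card Js = ?n - q"
      using obtain_subset_with_card_n[OF cardW] by metis
    have JsF: "Js \<in> F" using Js F_def by simp
    have finS: "finite {norm (xh J k - xh S k) | S. S \<subseteq> J \<and> card S = ?n - 2 * q}" for J
      by simp
    have pJs: "pi_fun q xh Js k \<le> 2 * B1"
      unfolding pi_fun_def
    proof (subst Max_le_iff[OF finS])
      obtain S0 where "S0 \<subseteq> Js" "card S0 = ?n - 2 * q"
        using obtain_subset_with_card_n[of "?n - 2*q" Js] Js by force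
      then show "{norm (xh Js k - xh S k) | S. S \<subseteq> Js \<and> card S = ?n - 2 * q} \<noteq> {}" by auto
      show "\<forall>a\<in>{norm (xh Js k - xh S k) | S. S \<subseteq> Js \<and> card S = ?n - 2 * q}. a \<le> 2 * B1"
      proof safe
        fix S assume S: "S \<subseteq> Js" "card S = ?n - 2 * q"
        have "norm (xh Js k - xh S k) \<le> norm (xh Js k - x k) + norm (xh S k - x k)"
          using norm_triangle_ineq4[of "xh Js k - x k" "xh S k - x k"] by simp
        also have "\<dots> \<le> B1 + B1"
          using Jb[OF JsF] Jb[of S] S Js F_def by (intro add_mono) auto
        finally show "norm (xh Js k - xh S k) \<le> 2 * B1" by simp
      qed
    qed
    have sk: "card (\<sigma> k) = ?n - q" using sg by blast
    have psk: "pi_fun q xh (\<sigma> k) k \<le> 2 * B1"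
      using sg Js(2) pJs order_trans by blast
    have "card (\<sigma> k) + card Js = card (\<sigma> k \<union> Js) + card (\<sigma> k \<inter> Js)"
      by (rule card_Un_Int) auto
    moreover have "card (\<sigma> k \<union> Js) \<le> ?n" by (rule card_mono) auto
    ultimately have "card (\<sigma> k \<inter> Js) \<ge> ?n - 2 * q" using sk Js q_lt by linarith
    then obtain S where S: "S \<subseteq> \<sigma> k \<inter> Js" "card S = ?n - 2 * q"
      using obtain_subset_with_card_n by metis
    have "norm (xh (\<sigma> k) k - x k) \<le> norm (xh (\<sigma> k) k - xh S k) + norm (xh S k - x k)"
      using norm_triangle_ineq[of "xh (\<sigma> k) k - xh S k" "xh S k - x k"] by simp
    also have "norm (xh (\<sigma> k) k - xh S k) \<le> pi_fun q xh (\<sigma> k) k"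
      unfolding pi_fun_def using S by (intro Max_ge[OF finS]) auto
    also have "norm (xh S k - x k) \<le> B1"
      using Jb[of S] S Js F_def by auto
    finally have "norm (xh (\<sigma> k) k - x k) \<le> 3 * B1" using psk by linarith
    then show "norm (xh (\<sigma> k) k - x k) \<le> (\<Sum>J\<in>F. 3 * b J e0 (real k))"
      unfolding B1_def by (simp add: sum_distrib_left)
  qed
qed

end
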